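(* Let $S\in\mathcal S_d^2(\kappa)$, let $0<\tau\le\epsilon$ and $\eta\ge\tau+\kappa(\epsilon/2+2\tau)^2$, let $m\ge d+2$, and let $y_1,\dots,y_n$ be pairwise distinct points of $B(S,\tau)$. For $r>0$ and $i\in\{1,\dots,n\}$ let $\mathring G_{i,r}=\#\{j\ne i: y_j\in B(y_i,r)\}$. Define, for $i,j\in\{1,\dots,n\}$, $$\mathring W_{ij}=\sum_{(i_1,\dots,i_{m-2})\in\{1,\dots,n\}^{m-2}}\alpha_d(y_i,y_j,y_{i_1},\dots,y_{i_{m-2}}),\qquad \mathring D_i=\sum_{j=1}^n\mathring W_{ij}.$$ Then for all $i\neq j$, $$\mathbf 1_{\{\|y_i-y_j\|<\epsilon/2\}}\,(\mathring G_{i,\epsilon/2}-1)^{\{m-2\}}\le\mathring W_{ij}\le\mathbf 1_{\{\|y_i-y_j\|<\epsilon\}}\,(\mathring G_{i,\epsilon}-1)^{\{m-2\}},$$ and for all $i$, $$\mathring G_{i,\epsilon/2}\,(\mathring G_{i,\epsilon/2}-1)^{\{m-2\}}\le\mathring D_i\le\mathring G_{i,\epsilon}\,(\mathring G_{i,\epsilon}-1)^{\{m-2\}},$$ where $r^{\{q\}}=r(r-1)\cdots(r-q+1)$.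
   Context: $B(x,r)$ is the open Euclidean ball; $B(S,\tau)=\{x\in\mathbb R^D:\mathrm{dist}(x,S)<\tau\}$. $\mathcal A_d$ is the set of $d$-dimensional affine subspaces of $\mathbb R^D$. For $m\ge d+2$ points, $\Lambda_d(z_1,\dots,z_m)=\min_{L\in\mathcal A_d}\max_{j}\mathrm{dist}(z_j,L)$. Given $\epsilon,\eta>0$, the affinity $\alpha_d(z_1,\dots,z_m)$ equals $0$ if $z_1,\dots,z_m$ are not pairwise distinct, and otherwise equals $\mathbf 1\{\mathrm{diam}\{z_1,\dots,z_m\}<\epsilon\}\cdot\mathbf 1\{\Lambda_d(z_1,\dots,z_m)<\eta\}$ (simple kernel). The reach of $S$ is the supremum of $t>0$ such that every $x$ with $\mathrm{dist}(x,S)<t$ has a unique nearest point in $S$. For $1\le d\le D-1$ and $\kappa\ge1$, $\mathcal S_d^2(\kappa)$ is the class of $d$-dimensional connected $C^2$ submanifolds $S\subset(0,1)^D$ without boundary with $1/\kappa\le\mathrm{diam}(S)\le\kappa$ and $\mathrm{reach}(S)\ge1/\kappa$. *)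

theory Defs
  imports "HOL-Analysis.Analysis"
begin

definition C2_on :: "'b::euclidean_space set \<Rightarrow> ('b \<Rightarrow> 'a::euclidean_space) \<Rightarrow> bool" where
  "C2_on V f \<longleftrightarrow> (\<exists>f' f''.
      (\<forall>x\<in>V. (f has_derivative blinfun_apply (f' x)) (at x)) \<and>
      (\<forall>x\<in>V. (f' has_derivative blinfun_apply (f'' x)) (at x)) \<and>
      continuous_on V f'' \<and>
      (\<forall>x\<in>V. inj (blinfun_apply (f' x))))"

text \<open>S is an embedded C^2 submanifold without boundary, of dimension DIM('b):
  around every point, S is locally the homeomorphic image of an open subset of 'b
  under a C^2 immersion.\<close>
definition C2_submanifold :: "'b::euclidean_space itself \<Rightarrow> 'a::euclidean_space set \<Rightarrow> bool" where
  "C2_submanifold _ S \<longleftrightarrow> (\<forall>p\<in>S. \<exists>U (V::'b set) \<phi> \<psi>.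
      open U \<and> p \<in> U \<and> open V \<and> C2_on V \<phi> \<and> homeomorphism V (S \<inter> U) \<phi> \<psi>)"

definition reach :: "'a::euclidean_space set \<Rightarrow> ereal" where
  "reach S = Sup {ereal t | t. t > 0 \<and>
      (\<forall>x. infdist x S < t \<longrightarrow> (\<exists>!p. p \<in> S \<and> dist x p = infdist x S))}"

text \<open>The class S_d^2(kappa); d = DIM('b), D = DIM('a).\<close>
definition in_class_S2 :: "'b::euclidean_space itself \<Rightarrow> real \<Rightarrow> 'a::euclidean_space set \<Rightarrow> bool" where
  "in_class_S2 B \<kappa> S \<longleftrightarrow> C2_submanifold B S \<and> S \<noteq> {} \<and> connected S \<and> S \<subseteq> box 0 One \<and>
      1 / \<kappa> \<le> diameter S \<and> diameter S \<le> \<kappa> \<and> reach S \<ge> ereal (1 / \<kappa>)"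

text \<open>Lambda_d: min over d-dimensional affine subspaces L of max_j dist(z_j, L)
  (the minimum is attained, so we write it as an infimum).\<close>
definition Lambda :: "nat \<Rightarrow> 'a::euclidean_space list \<Rightarrow> real" where
  "Lambda d zs = Inf {Max ((\<lambda>z. infdist z L) ` set zs) | L. affine L \<and> L \<noteq> {} \<and> aff_dim L = int d}"

definition alpha :: "nat \<Rightarrow> real \<Rightarrow> real \<Rightarrow> 'a::euclidean_space list \<Rightarrow> real" where
  "alpha d \<epsilon> \<eta> zs = (if distinct zs \<and> diameter (set zs) < \<epsilon> \<and> Lambda d zs < \<eta> then 1 else 0)"

definition ffall :: "real \<Rightarrow> nat \<Rightarrow> real" where
  "ffall r q = (\<Prod>k<q. r - real k)"

definition Gcount :: "(nat \<Rightarrow> 'a::metric_space) \<Rightarrow> nat \<Rightarrow> nat \<Rightarrow> real \<Rightarrow> real" where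
  "Gcount y n i r = real (card {j \<in> {1..n}. j \<noteq> i \<and> y j \<in> ball (y i) r})"

definition Wmat :: "nat \<Rightarrow> real \<Rightarrow> real \<Rightarrow> nat \<Rightarrow> (nat \<Rightarrow> 'a::euclidean_space) \<Rightarrow> nat \<Rightarrow> nat \<Rightarrow> nat \<Rightarrow> real" where
  "Wmat d \<epsilon> \<eta> m y n i j =
     (\<Sum>is \<in> {is. length is = m - 2 \<and> set is \<subseteq> {1..n}}. alpha d \<epsilon> \<eta> (y i # y j # map y is))"

definition Ddeg :: "nat \<Rightarrow> real \<Rightarrow> real \<Rightarrow> nat \<Rightarrow> (nat \<Rightarrow> 'a::euclidean_space) \<Rightarrow> nat \<Rightarrow> nat \<Rightarrow> real" where
  "Ddeg d \<epsilon> \<eta> m y n i = (\<Sum>j=1..n. Wmat d \<epsilon> \<eta> m y n i j)"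

end

theory Submission
  imports Defs
begin


definition UP :: "'a::euclidean_space set \<Rightarrow> real \<Rightarrow> bool" where
  "UP S t0 \<longleftrightarrow> (\<forall>x. infdist x S < t0 \<longrightarrow> (\<exists>!p. p \<in> S \<and> dist x p = infdist x S))"

lemma reach_UP:
  assumes "reach S \<ge> ereal c" "r < c"
  shows "\<exists>t>r. UP S t"
proof -
  have "ereal r < Sup {ereal t | t. t > 0 \<and>
      (\<forall>x. infdist x S < t \<longrightarrow> (\<exists>!p. p \<in> S \<and> dist x p = infdist x S))}"
  proof -
    have "ereal r < ereal c" using assms by simp
    then show ?thesis using assms(1) unfolding reach_def by (rule less_le_trans)
  qed
  then obtain q where "q \<in> {ereal t | t. t > 0 \<and>
      (\<forall>x. infdist x S < t \<longrightarrow> (\<exists>!p. p \<in> S \<and> dist x p = infdist x S))}" "ereal r < q"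
    using less_Sup_iff by blast
  then show ?thesis unfolding UP_def by auto
qed

lemma UP_closed:
  assumes "UP S t0" "t0 > 0" "S \<noteq> {}"
  shows "closed S"
proof -
  have "x \<in> S" if "x \<in> closure S" for x
  proof -
    have "infdist x S = 0" using that assms(3) in_closure_iff_infdist_zero by blast
    have "\<exists>!p. p \<in> S \<and> dist x p = infdist x S"
      using assms(1)[unfolded UP_def, rule_format, of x] assms(2) \<open>infdist x S = 0\<close> by simp
    then obtain p where "p \<in> S" "dist x p = infdist x S" by blast
    then show ?thesis using \<open>infdist x S = 0\<close> by simp
  qed
  then show ?thesis using closure_subset_eq by blast
qed

definition proj :: "'a::euclidean_space set \<Rightarrow> 'a \<Rightarrow> 'a" where
  "proj S x = (SOME p. p \<in> S \<and> dist x p = infdist x S)"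

lemma proj:
  assumes "closed S" "S \<noteq> {}"
  shows "proj S x \<in> S" "dist x (proj S x) = infdist x S"
proof -
  obtain p where "p \<in> S" "infdist x S = dist x p" using infdist_attains_inf assms by blast
  then have "\<exists>p. p \<in> S \<and> dist x p = infdist x S" by auto
  from someI_ex[OF this] show "proj S x \<in> S" "dist x (proj S x) = infdist x S"
    unfolding proj_def by auto
qed

lemma proj_unique:
  assumes "UP S t0" "closed S" "S \<noteq> {}" "infdist x S < t0" "p \<in> S" "dist x p = infdist x S"
  shows "proj S x = p"
  using assms proj[OF assms(2,3), of x] unfolding UP_def by blast

lemma proj_cont:
  assumes "UP S t0" "compact S" "S \<noteq> {}"
  shows "continuous_on {x. infdist x S < t0} (proj S)"
proof -
  let ?O = "{x. infdist x S < t0}"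
  have cl: "closed S" using assms compact_imp_closed by blast
  have fim: "proj S \<in> ?O \<rightarrow> S" using proj[OF cl assms(3)] by blast
  have eq: "(\<lambda>x. (x, proj S x)) ` ?O = (?O \<times> S) \<inter> {z. dist (fst z) (snd z) - infdist (fst z) S = 0}"
    using proj_unique[OF assms(1) cl assms(3)] proj[OF cl assms(3)]
    by (auto simp: image_iff)
  have "closed {z::'a\<times>'a. dist (fst z) (snd z) - infdist (fst z) S = 0}"
    by (intro closed_Collect_eq continuous_intros continuous_on_infdist)
  then have "closedin (top_of_set (?O \<times> S)) ((\<lambda>x. (x, proj S x)) ` ?O)"
    unfolding eq by (simp add: closedin_closed_Int)
  then show ?thesis using continuous_closed_graph_eq[OF assms(2) fim] by blast
qed



lemma le_infdist:
  assumes "S \<noteq> {}" "\<And>q. q \<in> S \<Longrightarrow> e \<le> dist y q"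
  shows "e \<le> infdist y S"
  unfolding infdist_notempty[OF assms(1)] by (rule cINF_greatest) (use assms in auto)

lemma proj_segment:
  assumes "UP S t0" "closed S" "S \<noteq> {}" "infdist x S < t0" "0 \<le> l" "l \<le> 1"
  shows "proj S (proj S x + l *\<^sub>R (x - proj S x)) = proj S x"
proof -
  define a where "a = proj S x"
  define y where "y = a + l *\<^sub>R (x - a)"
  have aS: "a \<in> S" and dxa: "dist x a = infdist x S" using proj[OF assms(2,3)] a_def by auto
  have dya: "dist y a = l * norm (x - a)" using assms(5) by (simp add: y_def dist_norm)
  have dxy: "dist x y = (1 - l) * norm (x - a)"
  proof -
    have "x - y = (1 - l) *\<^sub>R (x - a)" by (simp add: y_def algebra_simps)
    then show ?thesis using assms(6) by (simp add: dist_norm)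
  qed
  have "dist y a \<le> dist y q" if "q \<in> S" for q
  proof -
    have "dist x a \<le> dist x q" using dxa infdist_le[OF that] by simp
    also have "\<dots> \<le> dist x y + dist y q" by (rule dist_triangle)
    finally show ?thesis using dya dxy by (simp add: dist_norm algebra_simps)
  qed
  then have "dist y a \<le> infdist y S" using le_infdist[OF assms(3)] by blast
  then have eq: "dist y a = infdist y S" using infdist_le[OF aS, of y] by simp
  have "infdist y S \<le> infdist x S"
    using eq dya dxa assms(5,6) infdist_nonneg[of x S]
    by (simp add: dist_norm) (metis mult_left_le_one_le)
  then have "infdist y S < t0" using assms(4) by simp
  then have "proj S y = a" using proj_unique[OF assms(1,2,3) _ aS eq] by simp
  then show ?thesis by (simp add: y_def a_def)
qed

lemma good_proj:
  assumes "UP S t0" "closed S" "S \<noteq> {}" "a \<in> S" "0 \<le> t" "t < t0" "norm v = 1"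
    and good: "\<forall>q\<in>S. t \<le> dist (a + t *\<^sub>R v) q"
  shows "proj S (a + t *\<^sub>R v) = a" "infdist (a + t *\<^sub>R v) S = t"
proof -
  have d: "dist (a + t *\<^sub>R v) a = t" using assms(5,7) by (simp add: dist_norm)
  have "t \<le> infdist (a + t *\<^sub>R v) S" using le_infdist[OF assms(3)] good by blast
  moreover have "infdist (a + t *\<^sub>R v) S \<le> t" using infdist_le[OF assms(4)] d by metis
  ultimately show inf: "infdist (a + t *\<^sub>R v) S = t" by simp
  show "proj S (a + t *\<^sub>R v) = a"
    using proj_unique[OF assms(1,2,3) _ assms(4)] inf d assms(6) by simp
qed



lemma extend:
  assumes UP: "UP S t0" and cpt: "compact S" and ne: "S \<noteq> {}" and aS: "a \<in> S"
    and v: "norm v = 1" and t1: "0 < t1" "t1 \<le> r" and rt0: "r < t0"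
    and good1: "\<forall>q\<in>S. t1 \<le> dist (a + t1 *\<^sub>R v) q"
  shows "\<forall>q\<in>S. r \<le> dist (a + r *\<^sub>R v) q"
proof -
  have cl: "closed S" using cpt compact_imp_closed by blast
  define J where "J = {t1..r} \<inter> (\<Inter>q\<in>S. {t. t \<le> dist (a + t *\<^sub>R v) q})"
  have clJ: "closed J" unfolding J_def
    by (intro closed_Int closed_INT closed_atLeastAtMost ballI closed_Collect_le continuous_intros)
  have t1J: "t1 \<in> J" using good1 t1 by (auto simp: J_def)
  have bJ: "bdd_above J" by (auto simp: J_def bdd_above_def)
  define \<tau> where "\<tau> = Sup J"
  have tauJ: "\<tau> \<in> J" unfolding \<tau>_def using closed_contains_Sup[OF _ bJ clJ] t1J by blast
  have tau_max: "\<And>t. t \<in> J \<Longrightarrow> t \<le> \<tau>" unfolding \<tau>_def using bJ by (simp add: cSup_upper)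
  have tau1: "t1 \<le> \<tau>" "\<tau> \<le> r" and goodtau: "\<forall>q\<in>S. \<tau> \<le> dist (a + \<tau> *\<^sub>R v) q"
    using tauJ by (auto simp: J_def)
  show ?thesis
  proof (cases "\<tau> = r")
    case True
    then show ?thesis using goodtau by simp
  next
    case False
    then have tr: "\<tau> < r" using tau1 by simp
    define c where "c = a + \<tau> *\<^sub>R v"
    have tpos: "0 < \<tau>" using tau1 t1 by simp
    have projc: "proj S c = a" and infc: "infdist c S = \<tau>"
      using good_proj[OF UP cl ne aS _ _ v goodtau] tpos tr rt0 by (auto simp: c_def)
    define \<rho> where "\<rho> = min (r - \<tau>) ((t0 - \<tau>) / 3)"
    have rho: "0 < \<rho>" "\<rho> \<le> r - \<tau>" "\<tau> + 2 * \<rho> < t0" using tr rt0 unfolding \<rho>_def by (auto simp: min_def divide_simps)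
    define s where "s = \<tau> + \<rho>"
    define K where "K = cball c \<rho>"
    have Kin: "infdist z S < t0" if "z \<in> K" for z
    proof -
      have "infdist z S \<le> infdist c S + dist z c" by (rule infdist_triangle)
      also have "\<dots> \<le> \<tau> + \<rho>" using that infc by (auto simp: K_def dist_commute)
      finally show ?thesis using rho by simp
    qed
    have contp: "continuous_on K (proj S)"
      by (rule continuous_on_subset[OF proj_cont[OF UP cpt ne]]) (use Kin in auto)
    have Nge: "\<tau> \<le> norm (c - proj S z)" for z
      using infdist_le[OF proj(1)[OF cl ne], of c z] infc by (simp add: dist_norm)
    define F where "F z = c + max 0 (s - norm (c - proj S z)) *\<^sub>R ((1 / norm (c - proj S z)) *\<^sub>R (c - proj S z))" for z
    have contF: "continuous_on K F"
      unfolding F_def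
      apply (intro continuous_intros contp)
      using Nge tpos by (metis norm_zero not_le)
    have FK: "F \<in> K \<rightarrow> K"
    proof
      fix z assume "z \<in> K"
      have Np: "0 < norm (c - proj S z)" using Nge[of z] tpos by linarith
      have "dist c (F z) = max 0 (s - norm (c - proj S z))"
        using Np by (simp add: F_def dist_norm)
      also have "\<dots> \<le> \<rho>" using Nge[of z] rho by (simp add: s_def)
      finally show "F z \<in> K" by (simp add: K_def)
    qed
    obtain z where zK: "z \<in> K" and fz: "F z = z"
      using brouwer[of K F] contF FK rho by (auto simp: K_def)
    define b where "b = proj S z"
    define N where "N = norm (c - b)"
    have Np: "0 < N" "\<tau> \<le> N" using Nge[of z] tpos unfolding N_def b_def by linarith+
    show ?thesis
    proof (cases "s \<le> N")
      case True
      then have "F z = c" by (simp add: F_def N_def b_def)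
      then have "z = c" using fz by simp
      then have "N = \<tau>" using projc tpos by (simp add: N_def b_def c_def v)
      then show ?thesis using True rho by (simp add: s_def)
    next
      case False
      then have zeq: "z = c + ((s - N) / N) *\<^sub>R (c - b)"
        using fz by (simp add: F_def N_def b_def)
      have ceq: "c = b + (N / s) *\<^sub>R (z - b)"
      proof -
        have "z - b = (c - b) + ((s - N) / N) *\<^sub>R (c - b)" using zeq by (simp add: algebra_simps)
        also have "\<dots> = (1 + (s - N) / N) *\<^sub>R (c - b)" by (simp add: algebra_simps)
        also have "1 + (s - N) / N = s / N" using Np by (simp add: field_simps)
        finally have "(N / s) *\<^sub>R (z - b) = c - b" using Np rho tpos by (simp add: s_def)
        then show ?thesis by (simp add: algebra_simps)
      qed
      have "proj S c = b"
        using proj_segment[OF UP cl ne Kin[OF zK], of "N / s"] Np rho False ceq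
        by (simp add: b_def s_def)
      then have ba: "b = a" using projc by simp
      then have "N = \<tau>" using v tpos by (simp add: N_def c_def)
      have zas: "z = a + s *\<^sub>R v"
      proof -
        have "z = a + (\<tau> + (s - \<tau>) / \<tau> * \<tau>) *\<^sub>R v"
          using zeq ba \<open>N = \<tau>\<close> by (simp add: c_def algebra_simps)
        also have "\<tau> + (s - \<tau>) / \<tau> * \<tau> = s" using tpos by simp
        finally show ?thesis .
      qed
      have "infdist z S = dist z a"
        using proj(2)[OF cl ne, of z] b_def ba by simp
      then have "\<forall>q\<in>S. s \<le> dist (a + s *\<^sub>R v) q"
        using infdist_le[of _ S z] zas v rho tpos by (auto simp: dist_norm s_def)
      then have "s \<in> J" using rho tau1 by (auto simp: J_def s_def)
      then show ?thesis using tau_max rho by (fastforce simp: s_def)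
    qed
  qed
qed



lemma taylor2:
  fixes \<phi> :: "'b::euclidean_space \<Rightarrow> 'a::euclidean_space"
  assumes V: "open V" "u0 \<in> V"
    and d1: "\<forall>x\<in>V. (\<phi> has_derivative blinfun_apply (f' x)) (at x)"
    and d2: "\<forall>x\<in>V. (f' has_derivative blinfun_apply (f'' x)) (at x)"
    and c2: "continuous_on V f''"
  shows "\<exists>\<delta>>0. \<exists>M>0. cball u0 \<delta> \<subseteq> V \<and>
     (\<forall>u\<in>cball u0 \<delta>. norm (\<phi> u - \<phi> u0 - blinfun_apply (f' u0) (u - u0)) \<le> M * (norm (u - u0))\<^sup>2)"
proof -
  obtain \<delta> where \<delta>: "\<delta> > 0" "cball u0 \<delta> \<subseteq> V" using V open_contains_cball by blast
  have "compact (f'' ` cball u0 \<delta>)"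
    by (rule compact_continuous_image[OF continuous_on_subset[OF c2 \<delta>(2)]]) simp
  then obtain M where M0: "M > 0" "\<forall>y\<in>f'' ` cball u0 \<delta>. norm y \<le> M"
    using compact_imp_bounded bounded_pos by blast
  then have M: "M > 0" "\<And>x. x \<in> cball u0 \<delta> \<Longrightarrow> norm (f'' x) \<le> M" by auto
  have dd2: "\<And>x. x \<in> cball u0 \<delta> \<Longrightarrow> (f' has_derivative blinfun_apply (f'' x)) (at x within cball u0 \<delta>)"
  proof -
    fix x assume "x \<in> cball u0 \<delta>"
    then have "x \<in> V" using \<delta>(2) by blast
    then show "(f' has_derivative blinfun_apply (f'' x)) (at x within cball u0 \<delta>)"
      using d2 has_derivative_at_withinI by blast
  qed
  have on2: "\<And>x. x \<in> cball u0 \<delta> \<Longrightarrow> onorm (blinfun_apply (f'' x)) \<le> M"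
    using M(2) by (simp add: norm_blinfun.rep_eq[symmetric])
  have lip: "norm (f' w - f' u0) \<le> M * norm (w - u0)" if "w \<in> cball u0 \<delta>" for w
    using differentiable_bound[OF convex_cball dd2 on2 that] \<delta>(1) by simp
  have "norm (\<phi> u - \<phi> u0 - blinfun_apply (f' u0) (u - u0)) \<le> M * (norm (u - u0))\<^sup>2"
    if u: "u \<in> cball u0 \<delta>" for u
  proof -
    define \<rho> where "\<rho> = norm (u - u0)"
    have sub: "cball u0 \<rho> \<subseteq> cball u0 \<delta>" using u by (auto simp: \<rho>_def dist_norm norm_minus_commute)
    define g where "g w = \<phi> w - blinfun_apply (f' u0) w" for w
    have dg: "\<And>x. x \<in> cball u0 \<rho> \<Longrightarrow> (g has_derivative blinfun_apply (f' x - f' u0)) (at x within cball u0 \<rho>)"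
    proof -
      fix x assume x: "x \<in> cball u0 \<rho>"
      then have "x \<in> V" using \<delta>(2) sub by blast
      then have "(\<phi> has_derivative blinfun_apply (f' x)) (at x within cball u0 \<rho>)"
        using d1 has_derivative_at_withinI by blast
      moreover have "(blinfun_apply (f' u0) has_derivative blinfun_apply (f' u0)) (at x within cball u0 \<rho>)"
        by (rule bounded_linear_imp_has_derivative) (rule blinfun.bounded_linear_right)
      ultimately have "((\<lambda>w. \<phi> w - blinfun_apply (f' u0) w) has_derivative (\<lambda>h. blinfun_apply (f' x) h - blinfun_apply (f' u0) h)) (at x within cball u0 \<rho>)"
        by (rule has_derivative_diff)
      moreover have "(\<lambda>h. blinfun_apply (f' x) h - blinfun_apply (f' u0) h) = blinfun_apply (f' x - f' u0)"
        by (simp add: fun_eq_iff blinfun.diff_left)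
      ultimately show "(g has_derivative blinfun_apply (f' x - f' u0)) (at x within cball u0 \<rho>)"
        unfolding g_def by simp
    qed
    have og: "\<And>x. x \<in> cball u0 \<rho> \<Longrightarrow> onorm (blinfun_apply (f' x - f' u0)) \<le> M * \<rho>"
    proof -
      fix x assume x: "x \<in> cball u0 \<rho>"
      have "norm (f' x - f' u0) \<le> M * norm (x - u0)" using lip sub x by blast
      also have "\<dots> \<le> M * \<rho>" using x M(1) by (auto simp: dist_norm norm_minus_commute intro: mult_left_mono)
      finally show "onorm (blinfun_apply (f' x - f' u0)) \<le> M * \<rho>" by (simp add: norm_blinfun.rep_eq)
    qed
    have uin: "u \<in> cball u0 \<rho>" and u0in: "u0 \<in> cball u0 \<rho>" by (auto simp: \<rho>_def dist_norm norm_minus_commute)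
    have "norm (g u - g u0) \<le> (M * \<rho>) * norm (u - u0)"
      by (rule differentiable_bound[OF convex_cball dg og uin u0in])
    then have "norm ((\<phi> u - blinfun_apply (f' u0) u) - (\<phi> u0 - blinfun_apply (f' u0) u0)) \<le> (M * \<rho>) * norm (u - u0)"
      by (simp add: g_def)
    then show ?thesis by (simp add: \<rho>_def blinfun.diff_right power2_eq_square algebra_simps)
  qed
  then show ?thesis using \<delta> M by blast
qed



lemma local_normal:
  fixes \<phi> :: "'b::euclidean_space \<Rightarrow> 'a::euclidean_space"
  assumes V: "open V" "u0 \<in> V"
    and d1: "\<forall>x\<in>V. (\<phi> has_derivative blinfun_apply (f' x)) (at x)"
    and d2: "\<forall>x\<in>V. (f' has_derivative blinfun_apply (f'' x)) (at x)"
    and c2: "continuous_on V f''"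
    and inj: "inj (blinfun_apply (f' u0))"
    and U: "open U" "p \<in> U" and hom: "homeomorphism V (S \<inter> U) \<phi> \<psi>" and pu0: "\<phi> u0 = p"
    and v: "norm v = 1" and perp: "\<And>h. inner v (blinfun_apply (f' u0) h) = 0"
  shows "\<exists>t1>0. \<forall>t. 0 < t \<and> t \<le> t1 \<longrightarrow> (\<forall>q\<in>S. t \<le> dist (p + t *\<^sub>R v) q)"
proof -
  define A where "A = blinfun_apply (f' u0)"
  obtain \<delta> M where \<delta>: "\<delta> > 0" "M > 0" "cball u0 \<delta> \<subseteq> V"
    and tay: "\<And>u. u \<in> cball u0 \<delta> \<Longrightarrow> norm (\<phi> u - p - A (u - u0)) \<le> M * (norm (u - u0))\<^sup>2"
    using taylor2[OF V d1 d2 c2] pu0 unfolding A_def by blast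
  obtain c where c: "c > 0" "\<And>x. c * norm x \<le> norm (A x)"
    using linear_inj_bounded_below_pos[of A] inj blinfun.bounded_linear_right bounded_linear.linear
    unfolding A_def by metis
  define \<delta>' where "\<delta>' = min \<delta> (c / (2 * M))"
  have \<delta>': "\<delta>' > 0" "\<delta>' \<le> \<delta>" "\<delta>' \<le> c / (2 * M)" using \<delta> c by (auto simp: \<delta>'_def)
  define K where "K = 4 * M / c\<^sup>2"
  have K: "K > 0" using \<delta> c by (simp add: K_def)
  have keyu: "inner (\<phi> u - p) v \<le> K * (norm (\<phi> u - p))\<^sup>2" if u: "u \<in> cball u0 \<delta>'" for u
  proof -
    define e where "e = norm (u - u0)"
    have uin: "u \<in> cball u0 \<delta>" using u \<delta>' by auto
    have e: "0 \<le> e" "e \<le> c / (2 * M)" using u \<delta>' by (auto simp: e_def dist_norm norm_minus_commute)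
    have T: "norm (\<phi> u - p - A (u - u0)) \<le> M * e\<^sup>2" using tay[OF uin] by (simp add: e_def)
    have "inner (\<phi> u - p) v = inner (\<phi> u - p - A (u - u0)) v" using perp[of "u - u0"]
      by (simp add: inner_diff_right inner_diff_left A_def inner_commute)
    also have "\<dots> \<le> norm (\<phi> u - p - A (u - u0)) * norm v" by (rule norm_cauchy_schwarz)
    also have "\<dots> \<le> M * e\<^sup>2" using T v by simp
    finally have i1: "inner (\<phi> u - p) v \<le> M * e\<^sup>2" .
    have "c * e \<le> norm (A (u - u0))" using c(2) by (simp add: e_def)
    also have "\<dots> \<le> norm (\<phi> u - p) + norm (\<phi> u - p - A (u - u0))"
      using norm_triangle_sub[of "A (u - u0)" "\<phi> u - p"] by (simp add: norm_minus_commute)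
    also have "\<dots> \<le> norm (\<phi> u - p) + M * e\<^sup>2" using T by simp
    finally have "c * e - M * e\<^sup>2 \<le> norm (\<phi> u - p)" by simp
    moreover have "M * e\<^sup>2 \<le> (c / 2) * e"
    proof -
      have "M * e\<^sup>2 = (M * e) * e" by (simp add: power2_eq_square)
      also have "M * e \<le> c / 2" using e \<delta> by (simp add: field_simps)
      then have "(M * e) * e \<le> (c / 2) * e" using e(1) by (rule mult_right_mono)
      finally show ?thesis .
    qed
    ultimately have ce: "(c / 2) * e \<le> norm (\<phi> u - p)" by simp
    have "M * e\<^sup>2 = K * ((c / 2) * e)\<^sup>2" using c by (simp add: K_def power2_eq_square field_simps)
    also have "\<dots> \<le> K * (norm (\<phi> u - p))\<^sup>2"
      using ce e c K by (intro mult_left_mono power_mono) auto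
    finally show ?thesis using i1 by simp
  qed
  have pS: "p \<in> S \<inter> U" using hom V(2) pu0 unfolding homeomorphism_def by blast
  have psip: "\<psi> p = u0" using hom V(2) pu0 homeomorphism_apply1 by metis
  have contpsi: "continuous_on (S \<inter> U) \<psi>" using hom homeomorphism_cont2 by blast
  obtain e where e: "e > 0" "\<And>q. q \<in> S \<inter> U \<Longrightarrow> dist q p < e \<Longrightarrow> dist (\<psi> q) u0 < \<delta>'"
    using contpsi pS \<delta>'(1) psip unfolding continuous_on_iff by force
  obtain eU where eU: "eU > 0" "ball p eU \<subseteq> U" using U open_contains_ball by blast
  define e1 where "e1 = min e eU"
  have e1: "e1 > 0" using e eU by (simp add: e1_def)
  have keyq: "inner (q - p) v \<le> K * (norm (q - p))\<^sup>2" if "q \<in> S" "dist q p < e1" for q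
  proof -
    have qU: "q \<in> S \<inter> U" using that eU by (auto simp: e1_def dist_commute subset_iff)
    have "dist (\<psi> q) u0 < \<delta>'" using e(2)[OF qU] that by (simp add: e1_def)
    then have "\<psi> q \<in> cball u0 \<delta>'" by (simp add: dist_commute)
    moreover have "\<phi> (\<psi> q) = q" using hom qU homeomorphism_apply2 by metis
    ultimately show ?thesis using keyu by metis
  qed
  define t1 where "t1 = min (1 / (2 * K)) (e1 / 2)"
  have "\<forall>t. 0 < t \<and> t \<le> t1 \<longrightarrow> (\<forall>q\<in>S. t \<le> dist (p + t *\<^sub>R v) q)"
  proof (intro allI impI ballI)
    fix t q assume t: "0 < t \<and> t \<le> t1" and q: "q \<in> S"
    show "t \<le> dist (p + t *\<^sub>R v) q"
    proof (cases "dist q p < e1")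
      case True
      have i: "inner (q - p) v \<le> K * (norm (q - p))\<^sup>2" by (rule keyq[OF q True])
      have tK: "2 * t * K \<le> 1" using t K by (auto simp: t1_def field_simps)
      have "(dist (p + t *\<^sub>R v) q)\<^sup>2 = (norm (q - p))\<^sup>2 - 2 * t * inner (q - p) v + t\<^sup>2"
      proof -
        define w where "w = q - p"
        have "dist (p + t *\<^sub>R v) q = norm (t *\<^sub>R v - w)" by (simp add: w_def dist_norm algebra_simps)
        moreover have "(norm (t *\<^sub>R v - w))\<^sup>2 = t\<^sup>2 * (inner v v) - 2 * t * inner w v + inner w w"
          unfolding power2_norm_eq_inner by (simp add: inner_diff_left inner_diff_right inner_commute power2_eq_square)
        moreover have "inner v v = 1" using v by (simp add: power2_norm_eq_inner[symmetric])
        ultimately show ?thesis by (simp add: w_def power2_norm_eq_inner)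
      qed
      also have "\<dots> \<ge> t\<^sup>2"
      proof -
        have "2 * t * inner (q - p) v \<le> 2 * t * (K * (norm (q - p))\<^sup>2)" using i t by simp
        also have "\<dots> = (2 * t * K) * (norm (q - p))\<^sup>2" by simp
        also have "\<dots> \<le> (norm (q - p))\<^sup>2" using tK mult_right_mono[OF tK, of "(norm (q - p))\<^sup>2"] by simp
        finally show ?thesis by simp
      qed
      finally have "t\<^sup>2 \<le> (dist (p + t *\<^sub>R v) q)\<^sup>2" .
      then show ?thesis by (rule power2_le_imp_le) simp
    next
      case False
      have "dist p q \<le> dist p (p + t *\<^sub>R v) + dist (p + t *\<^sub>R v) q" by (rule dist_triangle)
      moreover have "dist p (p + t *\<^sub>R v) = t" using t v by (simp add: dist_norm)
      moreover have "t \<le> e1 / 2" using t by (simp add: t1_def)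
      ultimately show ?thesis using False by (simp add: dist_commute)
    qed
  qed
  moreover have "t1 > 0" using K e1 by (simp add: t1_def)
  ultimately show ?thesis by blast
qed



lemma sq_expand:
  fixes p q v :: "'a::euclidean_space"
  assumes v: "norm v = 1"
  shows "(dist (p + t *\<^sub>R v) q)\<^sup>2 = (norm (q - p))\<^sup>2 - 2 * t * inner (q - p) v + t\<^sup>2"
proof -
  define w where "w = q - p"
  have "dist (p + t *\<^sub>R v) q = norm (t *\<^sub>R v - w)" by (simp add: w_def dist_norm algebra_simps)
  moreover have "(norm (t *\<^sub>R v - w))\<^sup>2 = t\<^sup>2 * (inner v v) - 2 * t * inner w v + inner w w"
    unfolding power2_norm_eq_inner by (simp add: inner_diff_left inner_diff_right inner_commute power2_eq_square)
  moreover have "inner v v = 1" using v by (simp add: power2_norm_eq_inner[symmetric])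
  ultimately show ?thesis by (simp add: w_def power2_norm_eq_inner)
qed

lemma class_basic:
  assumes S: "in_class_S2 TYPE('b::euclidean_space) \<kappa> S" and kappa: "\<kappa> \<ge> 1"
  shows "\<exists>t0 > 1 / (2 * \<kappa>). UP S t0" "compact S" "S \<noteq> {}"
proof -
  have r: "reach S \<ge> ereal (1 / \<kappa>)" and ne: "S \<noteq> {}" and box: "S \<subseteq> box 0 One"
    using S unfolding in_class_S2_def by auto
  have "1 / (2 * \<kappa>) < 1 / \<kappa>" using kappa by (simp add: field_simps)
  then show ex: "\<exists>t0 > 1 / (2 * \<kappa>). UP S t0" using reach_UP[OF r] by blast
  then obtain t0 where "t0 > 1 / (2 * \<kappa>)" "UP S t0" by blast
  moreover have "1 / (2 * \<kappa>) > 0" using kappa by simp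
  ultimately have "closed S" using UP_closed ne by (metis order.strict_trans)
  moreover have "bounded S" using box bounded_box bounded_subset by blast
  ultimately show "compact S" using compact_eq_bounded_closed by blast
  show "S \<noteq> {}" by (rule ne)
qed

lemma tangent_bound:
  fixes S :: "'a::euclidean_space set"
  assumes S: "in_class_S2 TYPE('b::euclidean_space) \<kappa> S" and kappa: "\<kappa> \<ge> 1" and pS: "p \<in> S"
  shows "\<exists>L. affine L \<and> L \<noteq> {} \<and> aff_dim L = int DIM('b) \<and> (\<forall>q\<in>S. infdist q L \<le> \<kappa> * (norm (q - p))\<^sup>2)"
proof -
  obtain t0 where t0: "t0 > 1 / (2 * \<kappa>)" "UP S t0" using class_basic[OF S kappa] by blast
  have cpt: "compact S" and ne: "S \<noteq> {}" using class_basic[OF S kappa] by auto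
  have "C2_submanifold TYPE('b) S" using S unfolding in_class_S2_def by auto
  then obtain U and V :: "'b set" and \<phi> \<psi> where ch: "open U" "p \<in> U" "open V" "C2_on V \<phi>"
    and hom: "homeomorphism V (S \<inter> U) \<phi> \<psi>"
    using pS unfolding C2_submanifold_def by blast
  obtain f' f'' where d1: "\<forall>x\<in>V. (\<phi> has_derivative blinfun_apply (f' x)) (at x)"
    and d2: "\<forall>x\<in>V. (f' has_derivative blinfun_apply (f'' x)) (at x)"
    and c2: "continuous_on V f''" and inj: "\<forall>x\<in>V. inj (blinfun_apply (f' x))"
    using ch(4) unfolding C2_on_def by blast
  define u0 where "u0 = \<psi> p"
  have pSU: "p \<in> S \<inter> U" using pS ch by auto
  have u0V: "u0 \<in> V" using homeomorphism_image2[OF hom] pSU unfolding u0_def by (metis imageI)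
  have pu0: "\<phi> u0 = p" using homeomorphism_apply2[OF hom pSU] by (simp add: u0_def)
  define A where "A = blinfun_apply (f' u0)"
  have linA: "linear A" unfolding A_def using blinfun.bounded_linear_right bounded_linear.linear by blast
  have injA: "inj A" using inj u0V unfolding A_def by blast
  define T where "T = range A"
  have subT: "subspace T" using linear_subspace_image[OF linA subspace_UNIV] by (simp add: T_def)
  have spanT: "span T = T" using subT by (simp add: span_eq_iff)
  define L where "L = (\<lambda>x. p + x) ` T"
  have affL: "affine L" unfolding L_def using subspace_imp_affine[OF subT] affine_translation[of T p] by simp
  have neL: "L \<noteq> {}" unfolding L_def T_def by simp
  have "dim (A ` UNIV) = dim (UNIV::'b set)"
    by (rule dim_image_eq[OF linA]) (use injA in \<open>auto simp: inj_on_def inj_def\<close>)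
  then have "dim T = DIM('b)" by (simp add: T_def dim_UNIV)
  then have dimL: "aff_dim L = int DIM('b)"
    unfolding L_def by (simp only: aff_dim_translation_eq aff_dim_subspace[OF subT])
  define r where "r = 1 / (2 * \<kappa>)"
  have r: "0 < r" "r < t0" using t0 kappa by (auto simp: r_def)
  have bound: "infdist q L \<le> \<kappa> * (norm (q - p))\<^sup>2" if qS: "q \<in> S" for q
  proof -
    obtain y z where y: "y \<in> span T" and z: "\<And>w. w \<in> span T \<Longrightarrow> orthogonal z w" and yz: "q - p = y + z"
      using orthogonal_subspace_decomp_exists[of T "q - p"] by blast
    have yT: "y \<in> T" using y spanT by simp
    have pyL: "p + y \<in> L" using yT by (simp add: L_def)
    have inf1: "infdist q L \<le> norm z"
      using infdist_le[OF pyL, of q] yz by (simp add: dist_norm algebra_simps)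
    show ?thesis
    proof (cases "z = 0")
      case True
      have "0 \<le> \<kappa> * (norm (q - p))\<^sup>2" using kappa by simp
      then show ?thesis using inf1 True by simp
    next
      case False
      define v where "v = (1 / norm z) *\<^sub>R z"
      have v: "norm v = 1" using False by (simp add: v_def)
      have perp: "inner v (A h) = 0" for h
      proof -
        have "A h \<in> span T" unfolding T_def by (rule span_base) simp
        then have "inner z (A h) = 0" using z by (simp add: orthogonal_def)
        then show ?thesis by (simp add: v_def)
      qed
      have perp': "\<And>h. inner v (blinfun_apply (f' u0) h) = 0" using perp by (simp add: A_def)
      obtain t1 where t1: "t1 > 0" "\<forall>t. 0 < t \<and> t \<le> t1 \<longrightarrow> (\<forall>q\<in>S. t \<le> dist (p + t *\<^sub>R v) q)"
        using local_normal[OF ch(3) u0V d1 d2 c2 _ ch(1,2) hom pu0 v perp'] inj u0V by blast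
      define t where "t = min t1 r"
      have t: "0 < t" "t \<le> r" using t1 r by (auto simp: t_def)
      have gt: "\<forall>q\<in>S. t \<le> dist (p + t *\<^sub>R v) q" using t1 t by (auto simp: t_def)
      have gr: "\<forall>q\<in>S. r \<le> dist (p + r *\<^sub>R v) q"
        by (rule extend[OF t0(2) cpt ne pS v t(1) t(2) r(2) gt])
      have "r\<^sup>2 \<le> (dist (p + r *\<^sub>R v) q)\<^sup>2" using gr qS r by (simp add: power_mono)
      then have "2 * r * inner (q - p) v \<le> (norm (q - p))\<^sup>2" using sq_expand[OF v, of p r q] by simp
      then have "inner (q - p) v \<le> \<kappa> * (norm (q - p))\<^sup>2"
        using kappa by (simp add: r_def field_simps)
      moreover have "inner (q - p) v = norm z"
      proof -
        have "inner y z = 0" using z[OF y] by (simp add: orthogonal_def inner_commute)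
        then have "inner (q - p) z = (norm z)\<^sup>2" using yz by (simp add: inner_add_left power2_norm_eq_inner)
        then show ?thesis using False by (simp add: v_def power2_eq_square)
      qed
      ultimately show ?thesis using inf1 by simp
    qed
  qed
  show ?thesis using affL neL dimL bound by blast
qed

lemma Lambda_lt:
  fixes zs :: "'a::euclidean_space list"
  assumes "affine L" "L \<noteq> {}" "aff_dim L = int d" "zs \<noteq> []" "\<forall>z\<in>set zs. infdist z L < \<eta>"
  shows "Lambda d zs < \<eta>"
proof -
  let ?X = "{Max ((\<lambda>z. infdist z L) ` set zs) | L. affine L \<and> L \<noteq> {} \<and> aff_dim L = int d}"
  have fin: "finite ((\<lambda>z. infdist z L') ` set zs)" "(\<lambda>z. infdist z L') ` set zs \<noteq> {}" for L'
    using assms(4) by auto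
  have "bdd_below ?X"
  proof (rule bdd_belowI)
    fix x assume "x \<in> ?X"
    then obtain L' where "x = Max ((\<lambda>z. infdist z L') ` set zs)" by blast
    moreover obtain z where "z \<in> set zs" using assms(4) by (cases zs) auto
    moreover have "infdist z L' \<le> Max ((\<lambda>z. infdist z L') ` set zs)"
      using \<open>z \<in> set zs\<close> by (intro Max_ge[OF fin(1)]) simp
    ultimately show "0 \<le> x" using infdist_nonneg[of z L'] by linarith
  qed
  moreover have "Max ((\<lambda>z. infdist z L) ` set zs) \<in> ?X" using assms by blast
  ultimately have "Lambda d zs \<le> Max ((\<lambda>z. infdist z L) ` set zs)"
    unfolding Lambda_def by (rule cInf_lower[rotated])
  also have "\<dots> < \<eta>" using fin[of L] assms(5) by (simp add: Max_less_iff)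
  finally show ?thesis .
qed

lemma geo:
  fixes S :: "'a::euclidean_space set" and zs :: "'a list"
  assumes S: "in_class_S2 TYPE('b::euclidean_space) \<kappa> S" and kappa: "\<kappa> \<ge> 1"
    and tau: "0 < \<tau>" and eta: "\<eta> \<ge> \<tau> + \<kappa> * (\<epsilon> / 2 + 2 * \<tau>)\<^sup>2"
    and y0: "infdist y0 S < \<tau>" and zs: "zs \<noteq> []"
    and near: "\<forall>z\<in>set zs. infdist z S < \<tau> \<and> dist z y0 < \<epsilon> / 2"
  shows "Lambda DIM('b) zs < \<eta>"
proof -
  have cpt: "compact S" and ne: "S \<noteq> {}" using class_basic[OF S kappa] by auto
  have cl: "closed S" using cpt compact_imp_closed by blast
  obtain p where pS: "p \<in> S" and dp: "infdist y0 S = dist y0 p" using infdist_attains_inf[OF cl ne] by blast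
  obtain L where L: "affine L" "L \<noteq> {}" "aff_dim L = int DIM('b)"
    and Lb: "\<forall>q\<in>S. infdist q L \<le> \<kappa> * (norm (q - p))\<^sup>2"
    using tangent_bound[OF S kappa pS] by blast
  have "infdist z L < \<eta>" if z: "z \<in> set zs" for z
  proof -
    obtain q where qS: "q \<in> S" and dq: "infdist z S = dist z q" using infdist_attains_inf[OF cl ne] by blast
    have zq: "dist z q < \<tau>" using near z dq by metis
    have "norm (q - p) \<le> dist q z + dist z y0 + dist y0 p"
      using dist_triangle[of q p z] dist_triangle[of z p y0] by (simp add: dist_norm)
    also have "\<dots> < \<tau> + \<epsilon> / 2 + \<tau>"
    proof -
      have "dist z y0 < \<epsilon> / 2" using near z by blast
      then show ?thesis using zq y0 dp by (simp add: dist_commute)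
    qed
    finally have "norm (q - p) < \<epsilon> / 2 + 2 * \<tau>" by simp
    then have "(norm (q - p))\<^sup>2 \<le> (\<epsilon> / 2 + 2 * \<tau>)\<^sup>2" by (simp add: power_mono)
    then have "\<kappa> * (norm (q - p))\<^sup>2 \<le> \<kappa> * (\<epsilon> / 2 + 2 * \<tau>)\<^sup>2" using kappa by simp
    then have "infdist q L \<le> \<kappa> * (\<epsilon> / 2 + 2 * \<tau>)\<^sup>2" using Lb qS by force
    moreover have "infdist z L \<le> infdist q L + dist z q" by (rule infdist_triangle)
    ultimately show ?thesis using zq eta by simp
  qed
  then show ?thesis using Lambda_lt[OF L zs] by blast
qed



definition DL :: "'x set \<Rightarrow> nat \<Rightarrow> 'x list set" where
  "DL A k = {xs. length xs = k \<and> distinct xs \<and> set xs \<subseteq> A}"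

lemma DL_finite: "finite A \<Longrightarrow> finite (DL A k)"
  unfolding DL_def by (rule finite_subset[OF _ finite_lists_length_eq[of A k]]) auto

lemma DL_big:
  assumes "finite A" "card A < k"
  shows "DL A k = {}"
proof (rule ccontr)
  assume "DL A k \<noteq> {}"
  then obtain xs where xs: "length xs = k" "distinct xs" "set xs \<subseteq> A" unfolding DL_def by blast
  have "card (set xs) = k" using xs distinct_card by metis
  moreover have "card (set xs) \<le> card A" using card_mono[OF assms(1) xs(3)] .
  ultimately show False using assms(2) by simp
qed

lemma prod_fall:
  "k \<le> N \<Longrightarrow> real (\<Prod>{N - k + 1..N}) = ffall (real N) k"
proof (induction k)
  case 0
  then show ?case by (simp add: ffall_def)
next
  case (Suc k)
  have "Suc (N - Suc k) = N - k" using Suc.prems by simp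
  then have "(N - k) * \<Prod>{Suc (N - k)..N} = \<Prod>{Suc (N - Suc k)..N}"
    by (subst prod.insert[symmetric]) (simp add: atLeastAtMost_insertL)+
  then have "real (\<Prod>{N - Suc k + 1..N}) = real (N - k) * real (\<Prod>{N - k + 1..N})"
    by (metis Suc_eq_plus1 of_nat_mult)
  also have "\<dots> = (real N - real k) * ffall (real N) k" using Suc by (simp add: of_nat_diff)
  finally show ?case by (simp add: ffall_def)
qed

lemma card_DL_ffall:
  assumes "finite A"
  shows "real (card (DL A k)) = ffall (real (card A)) k"
proof (cases "k \<le> card A")
  case True
  then show ?thesis using card_lists_distinct_length_eq[OF assms True] prod_fall[OF True]
    by (simp add: DL_def)
next
  case False
  then have "DL A k = {}" using DL_big[OF assms] by simp
  moreover have "ffall (real (card A)) k = 0"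
    unfolding ffall_def using False by (intro prod_zero) auto
  ultimately show ?thesis by simp
qed

lemma alpha_cases: "alpha d \<epsilon> \<eta> zs = 0 \<or> alpha d \<epsilon> \<eta> zs = 1"
  by (simp add: alpha_def)

lemma alpha_nonneg: "0 \<le> alpha d \<epsilon> \<eta> zs"
  by (simp add: alpha_def)

lemma alpha_one: "alpha d \<epsilon> \<eta> zs \<noteq> 0 \<Longrightarrow> distinct zs \<and> diameter (set zs) < \<epsilon>"
  by (simp add: alpha_def split: if_splits)

abbreviation Tup :: "nat \<Rightarrow> nat \<Rightarrow> nat list set" where
  "Tup m n \<equiv> {is. length is = m - 2 \<and> set is \<subseteq> {1..n}}"

lemma Tup_finite: "finite (Tup m n)"
  by (rule finite_subset[OF _ finite_lists_length_eq[of "{1..n}" "m - 2"]]) auto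

lemma W_nonneg: "0 \<le> Wmat d \<epsilon> \<eta> m y n i j"
  unfolding Wmat_def by (intro sum_nonneg alpha_nonneg)

lemma W_diag: "Wmat d \<epsilon> \<eta> m y n i i = 0"
  unfolding Wmat_def by (simp add: alpha_def)

definition Nb :: "(nat \<Rightarrow> 'a::metric_space) \<Rightarrow> nat \<Rightarrow> nat \<Rightarrow> real \<Rightarrow> nat set" where
  "Nb y n i r = {k \<in> {1..n}. k \<noteq> i \<and> y k \<in> ball (y i) r}"

lemma Nb_finite: "finite (Nb y n i r)" unfolding Nb_def by simp

lemma Gcount_Nb: "Gcount y n i r = real (card (Nb y n i r))"
  by (simp add: Gcount_def Nb_def)

lemma W_upper:
  fixes y :: "nat \<Rightarrow> 'a::euclidean_space"
  assumes ij: "i \<in> {1..n}" "j \<in> {1..n}" "i \<noteq> j"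
  shows "Wmat d \<epsilon> \<eta> m y n i j \<le> (if dist (y i) (y j) < \<epsilon> then 1 else 0) * ffall (Gcount y n i \<epsilon> - 1) (m - 2)"
proof -
  let ?a = "\<lambda>is. alpha d \<epsilon> \<eta> (y i # y j # map y is)"
  let ?B = "DL (Nb y n i \<epsilon> - {j}) (m - 2)"
  have key: "dist (y i) (y j) < \<epsilon> \<and> is \<in> ?B" if "is \<in> Tup m n" "?a is \<noteq> 0" for "is"
  proof -
    have dz: "distinct (y i # y j # map y is)" and dm: "diameter (set (y i # y j # map y is)) < \<epsilon>"
      using alpha_one[OF that(2)] by auto
    have bnd: "bounded (set (y i # y j # map y is))" by (rule finite_imp_bounded) simp
    have dd: "dist a b < \<epsilon>" if "a \<in> set (y i # y j # map y is)" "b \<in> set (y i # y j # map y is)" for a b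
      using diameter_bounded_bound[OF bnd that] dm by simp
    have "dist (y i) (y j) < \<epsilon>" by (rule dd) auto
    moreover have "set is \<subseteq> Nb y n i \<epsilon> - {j}"
    proof
      fix k assume k: "k \<in> set is"
      then have "y k \<in> set (map y is)" by simp
      then have "y k \<noteq> y i" "y k \<noteq> y j" using dz by auto
      moreover have "dist (y i) (y k) < \<epsilon>" by (rule dd) (use k in auto)
      ultimately show "k \<in> Nb y n i \<epsilon> - {j}" using that(1) k by (auto simp: Nb_def)
    qed
    moreover have "distinct is" using dz by (simp add: distinct_map)
    ultimately show ?thesis using that(1) by (simp add: DL_def)
  qed
  show ?thesis
  proof (cases "dist (y i) (y j) < \<epsilon>")
    case False
    then have "\<And>is. is \<in> Tup m n \<Longrightarrow> ?a is = 0" using key by blast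
    then show ?thesis using False by (simp add: Wmat_def)
  next
    case True
    have jN: "j \<in> Nb y n i \<epsilon>" using True ij by (simp add: Nb_def)
    have BT: "?B \<subseteq> Tup m n" by (auto simp: DL_def Nb_def)
    have eqG: "real (card (Nb y n i \<epsilon> - {j})) = Gcount y n i \<epsilon> - 1"
    proof -
      have "card (Nb y n i \<epsilon>) \<noteq> 0" using jN Nb_finite[of y n i \<epsilon>] by auto
      then have "card (Nb y n i \<epsilon>) \<ge> 1" by linarith
      then show ?thesis using jN Nb_finite[of y n i \<epsilon>] by (simp add: Gcount_Nb card_Diff_singleton of_nat_diff)
    qed
    have "Wmat d \<epsilon> \<eta> m y n i j \<le> (\<Sum>is\<in>Tup m n. of_bool (is \<in> ?B))"
      unfolding Wmat_def
    proof (rule sum_mono)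
      fix "is" assume "is \<in> Tup m n"
      then show "?a is \<le> of_bool (is \<in> ?B)" using key[of "is"] alpha_cases[of d \<epsilon> \<eta> "y i # y j # map y is"] by auto
    qed
    also have "\<dots> = real (card ?B)"
    proof -
      have "Tup m n \<inter> {x. x \<in> ?B} = ?B" using BT by blast
      then show ?thesis using Tup_finite[of m n] by (simp only: sum_of_bool_eq)
    qed
    also have "\<dots> = ffall (real (card (Nb y n i \<epsilon> - {j}))) (m - 2)" by (rule card_DL_ffall) (simp add: Nb_finite)
    also have "\<dots> = ffall (Gcount y n i \<epsilon> - 1) (m - 2)" by (simp only: eqG)
    finally show ?thesis using True by simp
  qed
qed



lemma W_lower:
  fixes S :: "'a::euclidean_space set" and y :: "nat \<Rightarrow> 'a"
  assumes dim: "DIM('b::euclidean_space) = d"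
    and S: "in_class_S2 TYPE('b) \<kappa> S" and kappa: "\<kappa> \<ge> 1"
    and tau: "0 < \<tau>" "\<tau> \<le> \<epsilon>" and eta: "\<eta> \<ge> \<tau> + \<kappa> * (\<epsilon> / 2 + 2 * \<tau>)\<^sup>2"
    and inj: "inj_on y {1..n}" and near: "\<forall>i\<in>{1..n}. infdist (y i) S < \<tau>"
    and ij: "i \<in> {1..n}" "j \<in> {1..n}" "i \<noteq> j"
  shows "(if dist (y i) (y j) < \<epsilon> / 2 then 1 else 0) * ffall (Gcount y n i (\<epsilon> / 2) - 1) (m - 2)
           \<le> Wmat d \<epsilon> \<eta> m y n i j"
proof (cases "dist (y i) (y j) < \<epsilon> / 2")
  case False
  then show ?thesis using W_nonneg by simp
next
  case True
  let ?a = "\<lambda>is. alpha d \<epsilon> \<eta> (y i # y j # map y is)"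
  let ?N = "Nb y n i (\<epsilon> / 2)"
  let ?B = "DL (?N - {j}) (m - 2)"
  have jN: "j \<in> ?N" using True ij by (simp add: Nb_def)
  have BT: "?B \<subseteq> Tup m n" unfolding DL_def Nb_def by blast
  have one: "?a is = 1" if isB: "is \<in> ?B" for "is"
  proof -
    let ?zs = "y i # y j # map y is"
    have isN: "set is \<subseteq> ?N - {j}" and dis: "distinct is" using isB by (auto simp: DL_def)
    have isn: "set is \<subseteq> {1..n}" "i \<notin> set is" "j \<notin> set is" using isN by (auto simp: Nb_def)
    have yne: "y k \<noteq> y l" if "k \<in> {1..n}" "l \<in> {1..n}" "k \<noteq> l" for k l
      using inj that inj_on_eq_iff by metis
    have "distinct ?zs"
    proof -
      have "y i \<noteq> y j" using yne ij by blast
      moreover have "y i \<notin> y ` set is"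
      proof
        assume "y i \<in> y ` set is"
        then obtain k where k: "k \<in> set is" "y k = y i" by auto
        then have k1: "k \<in> {1..n}" and kx: "k \<noteq> i" using isn by auto
        show False using yne[OF k1 _ kx] k(2) ij by blast
      qed
      moreover have "y j \<notin> y ` set is"
      proof
        assume "y j \<in> y ` set is"
        then obtain k where k: "k \<in> set is" "y k = y j" by auto
        then have k1: "k \<in> {1..n}" and kx: "k \<noteq> j" using isn by auto
        show False using yne[OF k1 _ kx] k(2) ij by blast
      qed
      moreover have "distinct (map y is)"
        using dis inj_on_subset[OF inj isn(1)] by (simp add: distinct_map)
      ultimately show ?thesis by simp
    qed
    have eps: "0 < \<epsilon>" using tau by simp
    have inball: "dist z (y i) < \<epsilon> / 2" if "z \<in> set ?zs" for z
    proof -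
      have "z = y i \<or> z = y j \<or> (\<exists>k\<in>set is. z = y k)" using that by auto
      moreover have "dist (y k) (y i) < \<epsilon> / 2" if "k \<in> set is" for k
        using isN that by (auto simp: Nb_def dist_commute)
      ultimately show ?thesis using eps True by (auto simp: dist_commute)
    qed
    have nearz: "infdist z S < \<tau>" if "z \<in> set ?zs" for z
    proof -
      have "z = y i \<or> z = y j \<or> (\<exists>k\<in>set is. z = y k)" using that by auto
      then show ?thesis using near ij isn(1) by auto
    qed
    have "diameter (set ?zs) < \<epsilon>"
    proof -
      obtain a b where ab: "a \<in> set ?zs" "b \<in> set ?zs" "dist a b = diameter (set ?zs)"
      proof -
        have "compact (set ?zs)" by (rule finite_imp_compact) simp
        moreover have "set ?zs \<noteq> {}" by simp
        ultimately show ?thesis using diameter_compact_attained that by blast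
      qed
      have "dist a b \<le> dist a (y i) + dist b (y i)" using dist_triangle[of a b "y i"] by (simp add: dist_commute)
      also have "\<dots> < \<epsilon> / 2 + \<epsilon> / 2" using inball ab by (intro add_strict_mono) auto
      finally show ?thesis using ab by simp
    qed
    moreover have "Lambda d ?zs < \<eta>"
      using geo[OF S kappa tau(1) eta near[rule_format, OF ij(1)], of ?zs] nearz inball dim eps by auto
    ultimately show ?thesis using \<open>distinct ?zs\<close> by (simp add: alpha_def)
  qed
  have "(\<Sum>is\<in>?B. ?a is) \<le> Wmat d \<epsilon> \<eta> m y n i j"
    unfolding Wmat_def by (rule sum_mono2[OF Tup_finite BT]) (rule alpha_nonneg)
  moreover have "(\<Sum>is\<in>?B. ?a is) = real (card ?B)" using one by simp
  moreover have "real (card ?B) = ffall (real (card (?N - {j}))) (m - 2)" by (rule card_DL_ffall) (simp add: Nb_finite)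
  moreover have "real (card (?N - {j})) = Gcount y n i (\<epsilon> / 2) - 1"
  proof -
    have "card ?N \<noteq> 0" using jN Nb_finite[of y n i "\<epsilon> / 2"] by auto
    then have "card ?N \<ge> 1" by linarith
    then show ?thesis using jN Nb_finite[of y n i "\<epsilon> / 2"] by (simp add: Gcount_Nb card_Diff_singleton of_nat_diff)
  qed
  ultimately show ?thesis using True by simp
qed



lemma sum_restrict_const:
  fixes N :: "nat set" and n :: nat
  assumes "N \<subseteq> {1..n}"
  shows "(\<Sum>j=1..n. if j \<in> N then c else 0) = real (card N) * (c::real)"
proof -
  have "(\<Sum>j=1..n. if j \<in> N then c else 0) = (\<Sum>j\<in>{1..n} \<inter> N. c)"
    by (rule sum.inter_restrict[symmetric]) simp
  also have "{1..n} \<inter> N = N" using assms by blast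
  finally show ?thesis by simp
qed

theorem mainTheorem5:
  fixes S :: "'a::euclidean_space set" and y :: "nat \<Rightarrow> 'a"
    and d m n :: nat and \<kappa> \<epsilon> \<tau> \<eta> :: real
  assumes dim: "DIM('b::euclidean_space) = d" and d1: "1 \<le> d" and dD: "d \<le> DIM('a) - 1"
    and kappa: "\<kappa> \<ge> 1"
    and S: "in_class_S2 TYPE('b) \<kappa> S"
    and tau: "0 < \<tau>" "\<tau> \<le> \<epsilon>"
    and eta: "\<eta> \<ge> \<tau> + \<kappa> * (\<epsilon> / 2 + 2 * \<tau>)\<^sup>2"
    and m: "m \<ge> d + 2"
    and inj: "inj_on y {1..n}"
    and near: "\<forall>i\<in>{1..n}. infdist (y i) S < \<tau>"
  shows "(\<forall>i\<in>{1..n}. \<forall>j\<in>{1..n}. i \<noteq> j \<longrightarrow>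
            (if dist (y i) (y j) < \<epsilon> / 2 then 1 else 0) * ffall (Gcount y n i (\<epsilon> / 2) - 1) (m - 2)
              \<le> Wmat d \<epsilon> \<eta> m y n i j \<and>
            Wmat d \<epsilon> \<eta> m y n i j
              \<le> (if dist (y i) (y j) < \<epsilon> then 1 else 0) * ffall (Gcount y n i \<epsilon> - 1) (m - 2))
       \<and> (\<forall>i\<in>{1..n}.
            Gcount y n i (\<epsilon> / 2) * ffall (Gcount y n i (\<epsilon> / 2) - 1) (m - 2) \<le> Ddeg d \<epsilon> \<eta> m y n i \<and>
            Ddeg d \<epsilon> \<eta> m y n i \<le> Gcount y n i \<epsilon> * ffall (Gcount y n i \<epsilon> - 1) (m - 2))"
proof -
  have LOW: "(if dist (y i) (y j) < \<epsilon> / 2 then 1 else 0) * ffall (Gcount y n i (\<epsilon> / 2) - 1) (m - 2)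
              \<le> Wmat d \<epsilon> \<eta> m y n i j" if "i \<in> {1..n}" "j \<in> {1..n}" "i \<noteq> j" for i j
    by (rule W_lower[OF dim S kappa tau eta inj near that])
  have UP: "Wmat d \<epsilon> \<eta> m y n i j
              \<le> (if dist (y i) (y j) < \<epsilon> then 1 else 0) * ffall (Gcount y n i \<epsilon> - 1) (m - 2)"
    if "i \<in> {1..n}" "j \<in> {1..n}" "i \<noteq> j" for i j
    by (rule W_upper[OF that])
  have DD: "Gcount y n i (\<epsilon> / 2) * ffall (Gcount y n i (\<epsilon> / 2) - 1) (m - 2) \<le> Ddeg d \<epsilon> \<eta> m y n i \<and>
            Ddeg d \<epsilon> \<eta> m y n i \<le> Gcount y n i \<epsilon> * ffall (Gcount y n i \<epsilon> - 1) (m - 2)"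
    if i: "i \<in> {1..n}" for i
  proof
    let ?c1 = "ffall (Gcount y n i (\<epsilon> / 2) - 1) (m - 2)"
    let ?c2 = "ffall (Gcount y n i \<epsilon> - 1) (m - 2)"
    have memN: "j \<in> Nb y n i r \<longleftrightarrow> dist (y i) (y j) < r" if "j \<in> {1..n}" "j \<noteq> i" for j r
      using that by (simp add: Nb_def)
    have NS: "Nb y n i r \<subseteq> {1..n}" for r by (auto simp: Nb_def)
    have iN: "i \<notin> Nb y n i r" for r by (simp add: Nb_def)
    have "(\<Sum>j=1..n. if j \<in> Nb y n i (\<epsilon> / 2) then ?c1 else 0) \<le> (\<Sum>j=1..n. Wmat d \<epsilon> \<eta> m y n i j)"
    proof (rule sum_mono)
      fix j assume j: "j \<in> {1..n}"
      show "(if j \<in> Nb y n i (\<epsilon> / 2) then ?c1 else 0) \<le> Wmat d \<epsilon> \<eta> m y n i j"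
      proof (cases "j = i")
        case True
        then show ?thesis using iN W_nonneg by simp
      next
        case False
        then show ?thesis using LOW[OF i j not_sym[OF False]] memN[OF j False, of "\<epsilon> / 2"] W_nonneg[of d \<epsilon> \<eta> m y n i j]
          by (simp split: if_splits)
      qed
    qed
    moreover have "(\<Sum>j=1..n. if j \<in> Nb y n i (\<epsilon> / 2) then ?c1 else 0) = Gcount y n i (\<epsilon> / 2) * ?c1"
      using sum_restrict_const[OF NS[of "\<epsilon> / 2"], of ?c1] by (simp only: Gcount_Nb)
    ultimately show "Gcount y n i (\<epsilon> / 2) * ?c1 \<le> Ddeg d \<epsilon> \<eta> m y n i"
      unfolding Ddeg_def by simp
    have "(\<Sum>j=1..n. Wmat d \<epsilon> \<eta> m y n i j) \<le> (\<Sum>j=1..n. if j \<in> Nb y n i \<epsilon> then ?c2 else 0)"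
    proof (rule sum_mono)
      fix j assume j: "j \<in> {1..n}"
      show "Wmat d \<epsilon> \<eta> m y n i j \<le> (if j \<in> Nb y n i \<epsilon> then ?c2 else 0)"
      proof (cases "j = i")
        case True
        then show ?thesis using iN W_diag[of d \<epsilon> \<eta> m y n i] by simp
      next
        case False
        then show ?thesis using UP[OF i j not_sym[OF False]] memN[OF j False, of \<epsilon>]
          by (simp split: if_splits)
      qed
    qed
    moreover have "(\<Sum>j=1..n. if j \<in> Nb y n i \<epsilon> then ?c2 else 0) = Gcount y n i \<epsilon> * ?c2"
      using sum_restrict_const[OF NS[of \<epsilon>], of ?c2] by (simp only: Gcount_Nb)
    ultimately show "Ddeg d \<epsilon> \<eta> m y n i \<le> Gcount y n i \<epsilon> * ?c2"
      unfolding Ddeg_def by simp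
  qed
  show ?thesis using LOW UP DD by blast
qed

end
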